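(* Let $H\in\mathbb{C}^{N\times N}$ be an orthogonal projector, $|\psi_0\rangle$ a unit vector, $\psi_0=|\psi_0\rangle\langle\psi_0|$, $X_0:=[H,\psi_0]$, $Y_0:=i[H,X_0]$, $\mathcal{W}:=\operatorname{span}_{\mathbb{R}}\{X_0,Y_0\}$, and $c_0:=\|X_0\|_F$, assumed positive. For $U\in\mathrm{U}(N)$ and $\eta=(xX_0+yY_0)U\in\mathcal{W}U$ with $x,y\in\mathbb{R}$, define \[\mathrm{R}_U(\eta)=e^{ia_1H}e^{ib_1\psi_0}e^{i(a_2-a_1)H}e^{ib_2\psi_0}e^{-ia_2H}\,U,\] where $A=\operatorname{atan2}(y,x)$, $R=\sqrt{x^2+y^2}$, $a_1=A+\tfrac{\pi}{2}$, $a_2=A-\tfrac{\pi}{2}$, $b_1=-\tfrac R2$, $b_2=\tfrac R2$. Then for all $U\in\mathrm{U}(N)$ and $\eta\in\mathcal{W}U$, \[\|\mathrm{R}_U(\eta)-U\|_F\le\|\eta\|_F,\qquad \|\mathrm{R}_U(\eta)-U-\eta\|_F\le\frac{1}{4c_0}\|\eta\|_F^2 .\] Moreover, both bounds are tight: as $\eta\to0$ (with $\eta\ne0$), $\dfrac{\|\mathrm{R}_U(\eta)-U\|_F}{\|\eta\|_F}\to1$ and $\dfrac{\|\mathrm{R}_U(\eta)-U-\eta\|_F}{\|\eta\|_F^2}\to\dfrac{1}{4c_0}$.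
   Context: $\|\cdot\|_F$ is the Frobenius norm, $[A,B]=AB-BA$, $\mathrm{U}(N)$ is the unitary group, and $\operatorname{atan2}$ is the two-argument arctangent. When $c_0>0$, $X_0$ and $Y_0$ are linearly independent over $\mathbb{R}$, so $(x,y)$ is uniquely determined by $\eta$. *)

theory Defs
  imports "HOL-Analysis.Analysis"
begin

type_synonym 'n cmat = "complex ^'n ^'n"

definition adj :: "'n::finite cmat \<Rightarrow> 'n cmat" where
  "adj A = (\<chi> i j. cnj (A $ j $ i))"

definition cscale :: "complex \<Rightarrow> 'n::finite cmat \<Rightarrow> 'n cmat" where
  "cscale c A = (\<chi> i j. c * A $ i $ j)"

primrec mpow :: "'n::finite cmat \<Rightarrow> nat \<Rightarrow> 'n cmat" where
  "mpow A 0 = mat 1"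
| "mpow A (Suc k) = A ** mpow A k"

definition mexp :: "'n::finite cmat \<Rightarrow> 'n cmat" where
  "mexp A = (\<Sum>k. cscale (1 / of_nat (fact k)) (mpow A k))"

definition frob :: "'n::finite cmat \<Rightarrow> real" where
  "frob A = sqrt (\<Sum>i\<in>UNIV. \<Sum>j\<in>UNIV. (cmod (A $ i $ j))\<^sup>2)"

definition comm :: "'n::finite cmat \<Rightarrow> 'n cmat \<Rightarrow> 'n cmat" where
  "comm A B = A ** B - B ** A"

definition unitary :: "'n::finite cmat \<Rightarrow> bool" where
  "unitary U \<longleftrightarrow> adj U ** U = mat 1 \<and> U ** adj U = mat 1"

definition orth_proj :: "'n::finite cmat \<Rightarrow> bool" where
  "orth_proj H \<longleftrightarrow> H ** H = H \<and> adj H = H"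

definition unit_vec :: "complex ^'n::finite \<Rightarrow> bool" where
  "unit_vec v \<longleftrightarrow> (\<Sum>i\<in>UNIV. (cmod (v $ i))\<^sup>2) = 1"

definition ket_bra :: "complex ^'n::finite \<Rightarrow> 'n cmat" where
  "ket_bra v = (\<chi> i j. v $ i * cnj (v $ j))"

text \<open>atan2(y,x): the argument of x + iy in (-pi,pi]; atan2(0,0)=0.\<close>
definition atan2 :: "real \<Rightarrow> real \<Rightarrow> real" where
  "atan2 y x = Arg (Complex x y)"

definition X0 :: "'n::finite cmat \<Rightarrow> complex ^'n \<Rightarrow> 'n cmat" where
  "X0 H v = comm H (ket_bra v)"

definition Y0 :: "'n::finite cmat \<Rightarrow> complex ^'n \<Rightarrow> 'n cmat" where
  "Y0 H v = cscale \<i> (comm H (X0 H v))"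

definition Wcomb :: "'n::finite cmat \<Rightarrow> complex ^'n \<Rightarrow> real \<Rightarrow> real \<Rightarrow> 'n cmat" where
  "Wcomb H v x y = cscale (complex_of_real x) (X0 H v) + cscale (complex_of_real y) (Y0 H v)"

definition WU :: "'n::finite cmat \<Rightarrow> complex ^'n \<Rightarrow> 'n cmat \<Rightarrow> 'n cmat set" where
  "WU H v U = {Wcomb H v x y ** U | x y. True}"

definition Rxy :: "'n::finite cmat \<Rightarrow> complex ^'n \<Rightarrow> 'n cmat \<Rightarrow> real \<Rightarrow> real \<Rightarrow> 'n cmat" where
  "Rxy H v U x y =
    (let A = atan2 y x; R = sqrt (x\<^sup>2 + y\<^sup>2);
         a1 = A + pi / 2; a2 = A - pi / 2; b1 = - R / 2; b2 = R / 2;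
         P = ket_bra v
     in mexp (cscale (\<i> * a1) H) ** mexp (cscale (\<i> * b1) P) **
        mexp (cscale (\<i> * (a2 - a1)) H) ** mexp (cscale (\<i> * b2) P) **
        mexp (cscale (- \<i> * a2) H) ** U)"

text \<open>The retraction R_U(eta) for eta in W U: (x,y) is the unique coordinate pair
  (unique when c0 > 0).\<close>
definition Rret :: "'n::finite cmat \<Rightarrow> complex ^'n \<Rightarrow> 'n cmat \<Rightarrow> 'n cmat \<Rightarrow> 'n cmat" where
  "Rret H v U \<eta> = (let (x, y) = (THE (x, y). \<eta> = Wcomb H v x y ** U) in Rxy H v U x y)"

end

theory Submission
  imports Defs "HOL-Real_Asymp.Real_Asymp"
begin


lemma cscale_mult_left[simp]: "cscale c A  ** B = cscale c (A  ** B)"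
  by (simp add: cscale_def matrix_matrix_mult_def vec_eq_iff sum_distrib_left mult.assoc)
lemma cscale_mult_right[simp]: "A  ** cscale c B = cscale c (A  ** B)"
  by (simp add: cscale_def matrix_matrix_mult_def vec_eq_iff sum_distrib_left mult.left_commute)
lemma cscale_cscale[simp]: "cscale c (cscale d A) = cscale (c * d) A"
  by (simp add: cscale_def vec_eq_iff mult.assoc)
lemma cscale_add_left: "cscale (c+d) A = cscale c A + cscale d A"
  by (simp add: cscale_def vec_eq_iff distrib_right)
lemma cscale_add_right: "cscale c (A+B) = cscale c A + cscale c B"
  by (simp add: cscale_def vec_eq_iff distrib_left)
lemma cscale_1[simp]: "cscale 1 A = A" by (simp add: cscale_def vec_eq_iff)
lemma cscale_0[simp]: "cscale 0 A = 0" by (simp add: cscale_def vec_eq_iff)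
lemma cscale_0r[simp]: "cscale c 0 = 0" by (simp add: cscale_def vec_eq_iff)
lemma matrix_add_rdistrib': "(B + C)  ** A = B  ** A + C  ** A"
  by (simp add: matrix_matrix_mult_def vec_eq_iff sum.distrib distrib_right)
lemma matrix_sub_rdistrib': fixes A B C :: "'n::finite cmat" shows "(B - C)  ** A = B  ** A - C  ** A"
  by (simp add: matrix_matrix_mult_def vec_eq_iff left_diff_distrib sum_subtractf[symmetric])
lemma matrix_sub_ldistrib': fixes A B C :: "'n::finite cmat" shows "A  ** (B - C) = A  ** B - A  ** C"
  by (simp add: matrix_matrix_mult_def vec_eq_iff right_diff_distrib sum_subtractf[symmetric])

definition nf :: "'n::finite cmat \<Rightarrow> 'n cmat \<Rightarrow> complex \<Rightarrow> complex \<Rightarrow> complex \<Rightarrow> complex \<Rightarrow> complex \<Rightarrow> complex \<Rightarrow> 'n cmat" where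
  "nf H P s t c1 c2 c3 c4 = cscale s (mat 1) + cscale t H + cscale c1 P + cscale c2 (H  ** P)
     + cscale c3 (P  ** H) + cscale c4 (H  ** P  ** H)"

lemma nf_mult:
  fixes H P :: "'n::finite cmat"
  assumes HH: "H  ** H = H" and PP: "P  ** P = P" and PHP: "P  ** H  ** P = cscale a P"
  shows "nf H P s t c1 c2 c3 c4  ** nf H P s2 t2 d1 d2 d3 d4 =
    nf H P (s * s2) (s * t2 + t * s2 + t * t2)
      (s * d1 + c1 * s2 + c1 * d1 + a * c1 * d2 + a * c3 * d1 + a * c3 * d2)
      (s * d2 + c2 * s2 + t * d1 + t * d2 + c2 * d1 + a * c2 * d2 + a * c4 * d1 + a * c4 * d2)
      (s * d3 + c3 * s2 + c1 * t2 + c3 * t2 + c1 * d3 + a * c1 * d4 + a * c3 * d3 + a * c3 * d4)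
      (s * d4 + c4 * s2 + t * d3 + t * d4 + c2 * t2 + c4 * t2 + c2 * d3 + a * c2 * d4 + a * c4 * d3 + a * c4 * d4)"
proof -
  have r1: "H  ** (H  ** X) = H  ** X" for X using HH by (metis matrix_mul_assoc)
  have r2: "P  ** (P  ** X) = P  ** X" for X using PP by (metis matrix_mul_assoc)
  have r3: "P  ** (H  ** (P  ** X)) = cscale a (P  ** X)" for X using PHP
    by (metis matrix_mul_assoc cscale_mult_left)
  have r3': "P  ** (H  ** P) = cscale a P" using PHP by (metis matrix_mul_assoc)
  show ?thesis
    unfolding nf_def
    by (simp add: matrix_add_ldistrib matrix_add_rdistrib' cscale_add_left cscale_add_right
        matrix_mul_assoc[symmetric] HH PP r1 r2 r3 r3' algebra_simps)
qed


lemma mpow_idem: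
  fixes Q :: "'n::finite cmat"
  assumes "Q ** Q = Q"
  shows "mpow (cscale c Q) (Suc k) = cscale (c ^ Suc k) Q"
  by (induction k) (simp_all add: assms mult_ac)

lemma cscale_bl: "bounded_linear (\<lambda>z. cscale z (Q::'n::finite cmat))"
proof -
  have "linear (\<lambda>z. cscale z Q)"
    by (rule linearI) (simp_all add: cscale_add_left, simp add: cscale_def vec_eq_iff)
  then show ?thesis by (simp add: linear_conv_bounded_linear)
qed

lemma mexp_idem:
  fixes Q :: "'n::finite cmat"
  assumes QQ: "Q ** Q = Q"
  shows "mexp (cscale c Q) = mat 1 + cscale (exp c - 1) Q"
proof -
  have trm: "cscale (1 / of_nat (fact k)) (mpow (cscale c Q) k) =
     (if k = 0 then mat 1 - Q else 0) + cscale (c ^ k / of_nat (fact k)) Q" for k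
  proof (cases k)
    case 0 then show ?thesis by simp
  next
    case (Suc j) then show ?thesis using mpow_idem[OF QQ, of c j] by simp
  qed
  have s1: "(\<lambda>k. if k = 0 then mat 1 - Q else 0) sums (mat 1 - Q)"
    using sums_single[of 0 "\<lambda>_. mat 1 - Q"] by simp
  have e: "(\<lambda>k. c ^ k / of_nat (fact k)) sums exp c"
    using exp_converges[of c] by (simp add: scaleR_conv_of_real divide_inverse mult.commute)
  have s2: "(\<lambda>k. cscale (c ^ k / of_nat (fact k)) Q) sums cscale (exp c) Q"
    using bounded_linear.sums[OF cscale_bl e] .
  have "(\<lambda>k. cscale (1 / of_nat (fact k)) (mpow (cscale c Q) k)) sums (mat 1 - Q + cscale (exp c) Q)"
    unfolding trm using sums_add[OF s1 s2] .
  then have "mexp (cscale c Q) = mat 1 - Q + cscale (exp c) Q"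
    unfolding mexp_def by (rule sums_unique[symmetric])
  also have "\<dots> = mat 1 + cscale (exp c - 1) Q"
    by (simp add: cscale_def vec_eq_iff algebra_simps)
  finally show ?thesis .
qed

lemma adj_mult: "adj (A ** B) = adj B ** adj (A::'n::finite cmat)"
  by (simp add: adj_def matrix_matrix_mult_def vec_eq_iff mult.commute)
lemma adj_adj[simp]: "adj (adj A) = A"
  by (simp add: adj_def vec_eq_iff)

lemma frob_adj: "frob (adj A) = frob A"
  unfolding frob_def adj_def by (simp, subst sum.swap, simp)

lemma frob_eq_norm: "frob A = norm A"
  unfolding frob_def norm_vec_def L2_set_def
  by (simp add: sum_nonneg)

lemma cmod_sq_complex: "(complex_of_real (cmod z))\<^sup>2 = z * cnj z"
  using complex_norm_square[of z] by simp

lemma row_unitary: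
  fixes U :: "'n::finite cmat"
  assumes "U ** adj U = mat 1"
  shows "(\<Sum>j\<in>UNIV. (cmod (\<Sum>k\<in>UNIV. a k * U $ k $ j))\<^sup>2) = (\<Sum>k\<in>UNIV. (cmod (a k))\<^sup>2)"
proof -
  have d: "(\<Sum>j\<in>UNIV. U $ k $ j * cnj (U $ l $ j)) = (if k = l then 1 else 0)" for k l
    using arg_cong[OF assms, of "\<lambda>M. M $ k $ l"]
    by (simp add: matrix_matrix_mult_def adj_def mat_def)
  have "complex_of_real (\<Sum>j\<in>UNIV. (cmod (\<Sum>k\<in>UNIV. a k * U $ k $ j))\<^sup>2)
      = (\<Sum>j\<in>UNIV. (\<Sum>k\<in>UNIV. a k * U $ k $ j) * (\<Sum>l\<in>UNIV. cnj (a l) * cnj (U $ l $ j)))"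
    by (simp add: cmod_sq_complex cnj_sum)
  also have "\<dots> = (\<Sum>j\<in>UNIV. \<Sum>k\<in>UNIV. \<Sum>l\<in>UNIV. a k * cnj (a l) * (U $ k $ j * cnj (U $ l $ j)))"
    by (simp add: sum_product mult_ac sum_distrib_left, rule sum.cong[OF refl], rule sum.swap)
  also have "\<dots> = (\<Sum>k\<in>UNIV. \<Sum>j\<in>UNIV. \<Sum>l\<in>UNIV. a k * cnj (a l) * (U $ k $ j * cnj (U $ l $ j)))"
    by (rule sum.swap)
  also have "\<dots> = (\<Sum>k\<in>UNIV. \<Sum>l\<in>UNIV. \<Sum>j\<in>UNIV. a k * cnj (a l) * (U $ k $ j * cnj (U $ l $ j)))"
    by (rule sum.cong[OF refl], rule sum.swap)
  also have "\<dots> = (\<Sum>k\<in>UNIV. \<Sum>l\<in>UNIV. a k * cnj (a l) * (\<Sum>j\<in>UNIV. U $ k $ j * cnj (U $ l $ j)))"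
    by (simp add: sum_distrib_left)
  also have "\<dots> = (\<Sum>k\<in>UNIV. a k * cnj (a k))"
    by (simp add: d if_distrib if_distribR sum.delta cong: if_cong)
  also have "\<dots> = complex_of_real (\<Sum>k\<in>UNIV. (cmod (a k))\<^sup>2)"
    by (simp add: cmod_sq_complex)
  finally show ?thesis using of_real_eq_iff by blast
qed

lemma frob_mult_unitary_right:
  fixes A U :: "'n::finite cmat"
  assumes "U ** adj U = mat 1"
  shows "frob (A ** U) = frob A"
  unfolding frob_def matrix_matrix_mult_def
  by (simp add: row_unitary[OF assms])

lemma frob_mult_unitary_left:
  fixes A U :: "'n::finite cmat"
  assumes "adj U ** U = mat 1"
  shows "frob (U ** A) = frob A"
proof -
  have "frob (U ** A) = frob (adj A ** adj U)" by (metis frob_adj adj_mult)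
  also have "\<dots> = frob (adj A)" by (rule frob_mult_unitary_right) (simp add: assms)
  finally show ?thesis by (simp add: frob_adj)
qed


definition ip :: "('n::finite \<Rightarrow> complex) \<Rightarrow> ('n \<Rightarrow> complex) \<Rightarrow> complex" where
  "ip x y = (\<Sum>i\<in>UNIV. x i * cnj (y i))"

lemma ip_lin: "ip (\<lambda>i. a1 * x i + a2 * y i) (\<lambda>i. b1 * x' i + b2 * y' i) =
   a1 * cnj b1 * ip x x' + a1 * cnj b2 * ip x y' + a2 * cnj b1 * ip y x' + a2 * cnj b2 * ip y y'"
  unfolding ip_def by (simp add: algebra_simps sum.distrib sum_distrib_left)

lemma ip_cnj: "cnj (ip x y) = ip y x"
  unfolding ip_def by (simp add: mult.commute)

lemma bil: "(\<Sum>i\<in>UNIV. \<Sum>j\<in>UNIV. (x i * cnj (p j) + y i * cnj (q j)) * cnj (x i * cnj (p j) + y i * cnj (q j)))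
   = ip x x * ip p p + ip x y * ip q p + ip y x * ip p q + ip y y * ip q q"
  unfolding ip_def by (simp add: algebra_simps sum.distrib sum_product)

lemma quad4:
  fixes v w :: "'n::finite \<Rightarrow> complex" and a :: real
  assumes vv: "ip v v = 1" and vw: "ip v w = of_real a" and ww: "ip w w = of_real a"
  shows "(\<Sum>i\<in>UNIV. \<Sum>j\<in>UNIV. (cmod (c1 * v i * cnj (v j) + c2 * w i * cnj (v j) + c3 * v i * cnj (w j) + c4 * w i * cnj (w j)))\<^sup>2)
    = a\<^sup>2 * (cmod (c1 + c2 + c3 + c4))\<^sup>2 + a * (1 - a) * ((cmod (c1 + c2))\<^sup>2 + (cmod (c1 + c3))\<^sup>2)
      + (1 - a)\<^sup>2 * (cmod c1)\<^sup>2" (is "?L = ?R")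
proof -
  have wv: "ip w v = of_real a" using vw ip_cnj[of v w] by simp
  have e: "c1 * v i * cnj (v j) + c2 * w i * cnj (v j) + c3 * v i * cnj (w j) + c4 * w i * cnj (w j)
     = (c1 * v i + c2 * w i) * cnj (v j) + (c3 * v i + c4 * w i) * cnj (w j)" for i j
    by (simp add: algebra_simps)
  have "complex_of_real ?L = (\<Sum>i\<in>UNIV. \<Sum>j\<in>UNIV. ((c1 * v i + c2 * w i) * cnj (v j) + (c3 * v i + c4 * w i) * cnj (w j))
      * cnj ((c1 * v i + c2 * w i) * cnj (v j) + (c3 * v i + c4 * w i) * cnj (w j)))"
    by (simp only: e of_real_sum of_real_power cmod_sq_complex)
  also have "\<dots> = complex_of_real ?R"
    unfolding bil ip_lin vv vw ww wv
    by (simp only: of_real_add of_real_mult of_real_power of_real_diff of_real_1 cmod_sq_complex)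
      (simp add: algebra_simps power2_eq_square)
  finally show ?thesis using of_real_eq_iff by blast
qed


context
  fixes H :: "'n::finite cmat" and v :: "complex ^ 'n"
  assumes oH: "orth_proj H" and uv: "unit_vec v"
begin

definition "ww = (\<lambda>i. (H *v v) $ i)"
definition "aa = (\<Sum>i\<in>UNIV. (cmod (ww i))\<^sup>2)"

lemma HH: "H ** H = H" using oH by (simp add: orth_proj_def)
lemma Hherm: "cnj (H $ j $ i) = H $ i $ j"
  using oH unfolding orth_proj_def adj_def by (metis vec_lambda_beta)

lemma vv: "ip (\<lambda>i. v $ i) (\<lambda>i. v $ i) = 1"
proof -
  have "complex_of_real (\<Sum>i\<in>UNIV. (cmod (v $ i))\<^sup>2) = 1" using uv by (simp add: unit_vec_def)
  then show ?thesis unfolding ip_def by (simp add: of_real_sum cmod_sq_complex)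
qed

lemma wwdef: "ip ww ww = of_real aa"
  unfolding ip_def aa_def by (simp add: of_real_sum cmod_sq_complex)

lemma Hw: "H *v (H *v v) = H *v v"
  by (simp add: matrix_vector_mul_assoc HH)

lemma vw: "ip (\<lambda>i. v $ i) ww = of_real aa"
proof -
  have "ip ww ww = (\<Sum>i\<in>UNIV. (\<Sum>k\<in>UNIV. H $ i $ k * v $ k) * cnj (ww i))"
    unfolding ip_def ww_def by (simp add: matrix_vector_mult_def)
  also have "\<dots> = (\<Sum>i\<in>UNIV. \<Sum>k\<in>UNIV. v $ k * (H $ i $ k * cnj (ww i)))"
    by (simp add: sum_distrib_right sum_distrib_left mult_ac)
  also have "\<dots> = (\<Sum>k\<in>UNIV. \<Sum>i\<in>UNIV. v $ k * (H $ i $ k * cnj (ww i)))"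
    by (rule sum.swap)
  also have "\<dots> = (\<Sum>k\<in>UNIV. v $ k * cnj (\<Sum>i\<in>UNIV. H $ k $ i * ww i))"
    by (simp add: sum_distrib_left cnj_sum Hherm)
  also have "\<dots> = (\<Sum>k\<in>UNIV. v $ k * cnj (ww k))"
    using Hw unfolding ww_def by (simp add: matrix_vector_mult_def vec_eq_iff)
  finally show ?thesis using wwdef unfolding ip_def by simp
qed

lemma kb: "ket_bra v $ i $ j = v $ i * cnj (v $ j)"
  by (simp add: ket_bra_def)

lemma PP: "ket_bra v ** ket_bra v = ket_bra v"
proof -
  have s: "(\<Sum>k\<in>UNIV. v $ k * cnj (v $ k)) = 1" using vv unfolding ip_def by simp
  have "(\<Sum>k\<in>UNIV. v $ i * cnj (v $ k) * (v $ k * cnj (v $ j))) = v $ i * cnj (v $ j) * (\<Sum>k\<in>UNIV. v $ k * cnj (v $ k))" for i j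
    by (simp add: sum_distrib_left mult_ac)
  then show ?thesis
    by (simp add: vec_eq_iff matrix_matrix_mult_def kb s)
qed

lemma HP: "(H ** ket_bra v) $ i $ j = ww i * cnj (v $ j)"
  unfolding ket_bra_def matrix_matrix_mult_def ww_def matrix_vector_mult_def
  by (simp add: sum_distrib_right sum_distrib_left mult_ac)

lemma PH: "(ket_bra v ** H) $ i $ j = v $ i * cnj (ww j)"
  unfolding ket_bra_def matrix_matrix_mult_def ww_def matrix_vector_mult_def
  by (simp add: sum_distrib_left cnj_sum Hherm mult_ac)

lemma HPH: "(H ** ket_bra v ** H) $ i $ j = ww i * cnj (ww j)"
proof -
  have "(H ** ket_bra v ** H) $ i $ j = (\<Sum>k\<in>UNIV. ww i * cnj (v $ k) * H $ k $ j)"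
    by (simp add: matrix_matrix_mult_def[of "H ** ket_bra v"] HP)
  also have "\<dots> = ww i * cnj (ww j)"
    unfolding ww_def matrix_vector_mult_def
    by (simp add: sum_distrib_left cnj_sum Hherm mult_ac)
  finally show ?thesis .
qed

lemma PHP: "ket_bra v ** H ** ket_bra v = cscale (of_real aa) (ket_bra v)"
proof -
  have s: "(\<Sum>k\<in>UNIV. v $ k * cnj (ww k)) = of_real aa" using vw unfolding ip_def by simp
  have "(ket_bra v ** H ** ket_bra v) $ i $ j = (\<Sum>k\<in>UNIV. v $ i * cnj (ww k) * (v $ k * cnj (v $ j)))" for i j
    by (simp add: matrix_matrix_mult_def[of "ket_bra v ** H"] PH kb)
  also have "\<dots> i j = v $ i * cnj (v $ j) * (\<Sum>k\<in>UNIV. v $ k * cnj (ww k))" for i j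
    by (simp add: sum_distrib_left mult_ac)
  finally have e: "(ket_bra v ** H ** ket_bra v) $ i $ j = v $ i * cnj (v $ j) * of_real aa" for i j
    by (simp add: s)
  show ?thesis
    by (simp add: vec_eq_iff cscale_def e kb mult_ac)
qed

lemma nf_entry: "nf H (ket_bra v) 0 0 c1 c2 c3 c4 $ i $ j =
   c1 * v $ i * cnj (v $ j) + c2 * ww i * cnj (v $ j) + c3 * v $ i * cnj (ww j) + c4 * ww i * cnj (ww j)"
  by (simp add: nf_def cscale_def HP PH HPH kb mult_ac)

lemma frob_nf: "(frob (nf H (ket_bra v) 0 0 c1 c2 c3 c4))\<^sup>2 =
    aa\<^sup>2 * (cmod (c1 + c2 + c3 + c4))\<^sup>2 + aa * (1 - aa) * ((cmod (c1 + c2))\<^sup>2 + (cmod (c1 + c3))\<^sup>2)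
      + (1 - aa)\<^sup>2 * (cmod c1)\<^sup>2"
proof -
  have "(frob (nf H (ket_bra v) 0 0 c1 c2 c3 c4))\<^sup>2 =
     (\<Sum>i\<in>UNIV. \<Sum>j\<in>UNIV. (cmod (c1 * v $ i * cnj (v $ j) + c2 * ww i * cnj (v $ j) + c3 * v $ i * cnj (ww j) + c4 * ww i * cnj (ww j)))\<^sup>2)"
    unfolding frob_def nf_entry by (simp add: sum_nonneg)
  also note quad4[OF vv vw wwdef]
  finally show ?thesis .
qed

end


lemma nf_cong: "s = s' \<Longrightarrow> t = t' \<Longrightarrow> c1 = d1 \<Longrightarrow> c2 = d2 \<Longrightarrow> c3 = d3 \<Longrightarrow> c4 = d4 \<Longrightarrow>
  nf H P s t c1 c2 c3 c4 = nf H P s' t' d1 d2 d3 d4" by simp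

lemma nf_diff: "nf H P s t c1 c2 c3 c4 - nf H P s' t' d1 d2 d3 d4 = nf H P (s - s') (t - t') (c1 - d1) (c2 - d2) (c3 - d3) (c4 - d4)"
  by (simp add: nf_def cscale_def vec_eq_iff algebra_simps)

lemma exp_cis: "exp (\<i> * complex_of_real t) = cis t"
  by (simp add: cis_conv_exp)

lemma frob_nonneg: "0 \<le> frob A" by (simp add: frob_def sum_nonneg)

context
  fixes H :: "'n::finite cmat" and v :: "complex ^ 'n"
  assumes oH: "orth_proj H" and uv: "unit_vec v"
begin

lemmas nfm = nf_mult[OF HH[OF oH uv] PP[OF oH uv] PHP[OF oH uv]]

lemma mexpH: "mexp (cscale c H) = nf H (ket_bra v) 1 (exp c - 1) 0 0 0 0"
  by (simp add: mexp_idem[OF HH[OF oH uv]] nf_def)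

lemma mexpP: "mexp (cscale c (ket_bra v)) = nf H (ket_bra v) 1 0 (exp c - 1) 0 0 0"
  by (simp add: mexp_idem[OF PP[OF oH uv]] nf_def)

lemma mat1_nf: "mat 1 = nf H (ket_bra v) 1 0 0 0 0 0"
  by (simp add: nf_def)

lemma X0_nf: "X0 H v = nf H (ket_bra v) 0 0 0 1 (-1) 0"
  by (simp add: nf_def X0_def comm_def cscale_def vec_eq_iff)

lemma Y0_nf: "Y0 H v = nf H (ket_bra v) 0 0 0 \<i> \<i> (-2 * \<i>)"
proof -
  have h: "H ** (H ** ket_bra v) = H ** ket_bra v" using HH[OF oH uv] by (metis matrix_mul_assoc)
  have h2: "ket_bra v ** H ** H = ket_bra v ** H" using HH[OF oH uv] by (metis matrix_mul_assoc)
  have c: "comm H (X0 H v) = H ** ket_bra v + ket_bra v ** H - (H ** ket_bra v ** H + H ** ket_bra v ** H)"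
    unfolding X0_def comm_def
    by (simp add: matrix_sub_ldistrib' matrix_sub_rdistrib' matrix_mul_assoc HH[OF oH uv] h h2)
  show ?thesis
    unfolding Y0_def c by (simp add: nf_def cscale_def vec_eq_iff algebra_simps)
qed

lemma Wcomb_nf: "Wcomb H v x y = nf H (ket_bra v) 0 0 0 (of_real x + \<i> * of_real y) (- of_real x + \<i> * of_real y) (-2 * \<i> * of_real y)"
  by (simp add: Wcomb_def X0_nf Y0_nf nf_def cscale_def vec_eq_iff algebra_simps)

lemma conj_formula:
  "nf H (ket_bra v) 1 u 0 0 0 0 ** nf H (ket_bra v) s t c1 c2 c3 c4 ** nf H (ket_bra v) 1 u' 0 0 0 0
   = nf H (ket_bra v) s (s * u' + (t + u * s + u * t) * (1 + u')) c1 (c2 + u * (c1 + c2)) (c3 + u' * (c1 + c3))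
       ((c4 + u * (c3 + c4)) * (1 + u') + u' * (c2 + u * (c1 + c2)))"
  by (simp add: nfm, rule nf_cong) (simp_all add: algebra_simps)

lemma frob_conj:
  assumes uu: "(1 + u) * (1 + u') = 1" and cu: "cmod (1 + u) = 1"
  shows "frob (nf H (ket_bra v) 1 u 0 0 0 0 ** nf H (ket_bra v) 0 0 c1 c2 c3 c4 ** nf H (ket_bra v) 1 u' 0 0 0 0)
    = frob (nf H (ket_bra v) 0 0 c1 c2 c3 c4)"
proof -
  have cu': "cmod (1 + u') = 1" using arg_cong[OF uu, of cmod] cu by (simp add: norm_mult)
  have e1: "c1 + (c2 + u * (c1 + c2)) = (1 + u) * (c1 + c2)" by (simp add: algebra_simps)
  have e2: "c1 + (c3 + u' * (c1 + c3)) = (1 + u') * (c1 + c3)" by (simp add: algebra_simps)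
  have e3: "c1 + (c2 + u * (c1 + c2)) + (c3 + u' * (c1 + c3)) + ((c4 + u * (c3 + c4)) * (1 + u') + u' * (c2 + u * (c1 + c2)))
     = ((1 + u) * (1 + u')) * (c1 + c2 + c3 + c4)" by (simp add: algebra_simps)
  have n1: "cmod (c1 + (c2 + u * (c1 + c2))) = cmod (c1 + c2)" by (simp only: e1 norm_mult cu mult_1_left)
  have n2: "cmod (c1 + (c3 + u' * (c1 + c3))) = cmod (c1 + c3)" by (simp only: e2 norm_mult cu' mult_1_left)
  have n3: "cmod (c1 + (c2 + u * (c1 + c2)) + (c3 + u' * (c1 + c3)) + ((c4 + u * (c3 + c4)) * (1 + u') + u' * (c2 + u * (c1 + c2))))
     = cmod (c1 + c2 + c3 + c4)" by (simp only: e3 uu mult_1_left)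
  have "(frob (nf H (ket_bra v) 1 u 0 0 0 0 ** nf H (ket_bra v) 0 0 c1 c2 c3 c4 ** nf H (ket_bra v) 1 u' 0 0 0 0))\<^sup>2
      = (frob (nf H (ket_bra v) 0 0 c1 c2 c3 c4))\<^sup>2"
    unfolding conj_formula mult_zero_left mult_zero_right add_0_left add_0_right frob_nf[OF oH uv]
      n1 n2 n3 ..
  then show ?thesis by (rule power2_eq_imp_eq[OF _ frob_nonneg frob_nonneg])
qed

end


lemma cmod_real_sq: "(cmod (complex_of_real r))\<^sup>2 = r\<^sup>2" by simp
lemma cmod_Complex_sq: "(cmod (Complex a b))\<^sup>2 = a\<^sup>2 + b\<^sup>2" by (simp add: cmod_power2)

lemma pq_facts:
  fixes th a :: real
  defines "p \<equiv> cis (-th) - 1" and "q \<equiv> cis th - 1" and "b \<equiv> 1 - 2 * complex_of_real a"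
  shows "p + q - p * q * b = complex_of_real (-4 * (1 - cos th) * (1 - a))"
    and "p + q + p * q * b = complex_of_real (-4 * (1 - cos th) * a)"
    and "p - q + p * q * b = Complex (2 * (1 - cos th) * (1 - 2 * a)) (- 2 * sin th)"
    and "p - q - p * q * b = Complex (- 2 * (1 - cos th) * (1 - 2 * a)) (- 2 * sin th)"
proof -
  have sc: "sin th * sin th = 1 - cos th * cos th" using sin_squared_eq[of th] by (simp add: power2_eq_square)
  have pq: "p * q = complex_of_real (2 - 2 * cos th)"
    unfolding p_def q_def by (simp add: complex_eq_iff algebra_simps power2_eq_square[symmetric] sc)
  have ps: "p + q = complex_of_real (2 * cos th - 2)"
    unfolding p_def q_def by (simp add: complex_eq_iff)
  have pm: "p - q = Complex 0 (-2 * sin th)"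
    unfolding p_def q_def by (simp add: complex_eq_iff)
  show "p + q - p * q * b = complex_of_real (-4 * (1 - cos th) * (1 - a))"
    unfolding ps pq b_def by (simp add: complex_eq_iff algebra_simps)
  show "p + q + p * q * b = complex_of_real (-4 * (1 - cos th) * a)"
    unfolding ps pq b_def by (simp add: complex_eq_iff algebra_simps)
  show "p - q + p * q * b = Complex (2 * (1 - cos th) * (1 - 2 * a)) (- 2 * sin th)"
    unfolding pm pq b_def by (simp add: complex_eq_iff algebra_simps)
  show "p - q - p * q * b = Complex (- 2 * (1 - cos th) * (1 - 2 * a)) (- 2 * sin th)"
    unfolding pm pq b_def by (simp add: complex_eq_iff algebra_simps)
qed

lemma exp_cis': "exp (- \<i> * complex_of_real t) = cis (- t)"
  by (simp add: cis_conv_exp)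

context
  fixes H :: "'n::finite cmat" and v :: "complex ^ 'n"
  assumes oH: "orth_proj H" and uv: "unit_vec v"
begin

lemma frob_Wcomb: "(frob (Wcomb H v x y))\<^sup>2 = 2 * (aa H v * (1 - aa H v)) * (x\<^sup>2 + y\<^sup>2)"
proof -
  have e: "(cmod (\<i> * complex_of_real y - complex_of_real x))\<^sup>2 = x\<^sup>2 + y\<^sup>2"
     "(cmod (complex_of_real x + \<i> * complex_of_real y))\<^sup>2 = x\<^sup>2 + y\<^sup>2"
    by (simp_all add: cmod_power2)
  show ?thesis
    unfolding Wcomb_nf[OF oH uv] frob_nf[OF oH uv]
    by (simp add: e algebra_simps)
qed

lemma main_calc:
  fixes x y :: real and U :: "'n cmat"
  defines "th \<equiv> sqrt (x\<^sup>2 + y\<^sup>2) / 2" and "m \<equiv> aa H v * (1 - aa H v)"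
  shows "\<exists>V. Rxy H v U x y = V ** U \<and> (frob (V - mat 1))\<^sup>2 = 16 * m * (1 - cos th)
     \<and> (frob (V - mat 1 - Wcomb H v x y))\<^sup>2 = 8 * m * ((1 - cos th)\<^sup>2 + (th - sin th)\<^sup>2)"
proof -
  define A where "A = atan2 y x"
  define R where "R = sqrt (x\<^sup>2 + y\<^sup>2)"
  define a1 where "a1 = A + pi / 2"
  define a2 where "a2 = A - pi / 2"
  define b1 where "b1 = - R / 2"
  define b2 where "b2 = R / 2"
  define P where "P = ket_bra v"
  define u where "u = cis a1 - 1"
  define u' where "u' = cis (- a1) - 1"
  define p where "p = cis (- th) - 1"
  define q where "q = cis th - 1"
  define b where "b = 1 - 2 * complex_of_real (aa H v)"
  define C1 where "C1 = p + q + p * q * b"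
  define C2 where "C2 = - 2 * q"
  define C3 where "C3 = - 2 * q - 2 * p * q * b"
  define C4 where "C4 = 4 * q"
  define D2 where "D2 = C2 + \<i> * complex_of_real R"
  define D3 where "D3 = C3 + \<i> * complex_of_real R"
  define D4 where "D4 = C4 - 2 * \<i> * complex_of_real R"
  define E1 where "E1 = nf H P 1 u 0 0 0 0"
  define E1' where "E1' = nf H P 1 u' 0 0 0 0"
  define S where "S = nf H P 1 (-2) 0 0 0 0"
  define F1 where "F1 = nf H P 1 0 p 0 0 0"
  define F2 where "F2 = nf H P 1 0 q 0 0 0"
  define W where "W = nf H P 1 0 C1 C2 C3 C4"
  define V where "V = E1 ** W ** E1'"
  have thR: "th = R / 2" unfolding th_def R_def ..
  have R2: "R = 2 * th" unfolding thR by simp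
  have uu: "(1 + u) * (1 + u') = 1" unfolding u_def u'_def by (simp add: cis_mult)
  have cu: "cmod (1 + u) = 1" unfolding u_def by simp
  note nfm' = nfm[OF oH uv, folded P_def]
  have r0: "Rxy H v U x y = mexp (cscale (\<i> * complex_of_real a1) H) ** mexp (cscale (\<i> * (- complex_of_real R / 2)) P) **
        mexp (cscale (\<i> * (complex_of_real a2 - complex_of_real a1)) H) ** mexp (cscale (\<i> * (complex_of_real R / 2)) P) **
        mexp (cscale (- \<i> * complex_of_real a2) H) ** U"
    unfolding Rxy_def Let_def A_def R_def a1_def a2_def P_def by (rule refl)
  have cb1: "\<i> * (- complex_of_real R / 2) = \<i> * complex_of_real b1" unfolding b1_def by simp
  have cb2: "\<i> * (complex_of_real R / 2) = \<i> * complex_of_real b2" unfolding b2_def by simp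
  have ca: "\<i> * (complex_of_real a2 - complex_of_real a1) = \<i> * complex_of_real (a2 - a1)" by simp
  note r0 = r0[unfolded cb1 cb2 ca]
  have m1: "mexp (cscale (\<i> * a1) H) = E1"
    unfolding E1_def u_def P_def by (simp add: mexpH[OF oH uv] exp_cis)
  have m2: "mexp (cscale (\<i> * b1) P) = F1"
  proof -
    have "b1 = - th" by (simp add: b1_def thR)
    then show ?thesis unfolding P_def F1_def p_def by (simp only: mexpP[OF oH uv] exp_cis)
  qed
  have m3: "mexp (cscale (\<i> * (a2 - a1)) H) = S"
  proof -
    have "a2 - a1 = - pi" unfolding a1_def a2_def by simp
    then show ?thesis unfolding S_def P_def
      by (simp only: mexpH[OF oH uv] exp_cis) (rule nf_cong, simp_all add: complex_eq_iff)
  qed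
  have m4: "mexp (cscale (\<i> * b2) P) = F2"
  proof -
    have "b2 = th" by (simp add: b2_def thR)
    then show ?thesis unfolding P_def F2_def q_def by (simp only: mexpP[OF oH uv] exp_cis)
  qed
  have m5: "mexp (cscale (- \<i> * a2) H) = S ** E1'"
  proof -
    have aa2: "- a2 = - a1 + pi" by (simp add: a1_def a2_def)
    have "cis (- a2) = cis (- a1) * cis pi" by (simp only: cis_mult aa2)
    then have "cis (- a2) = - cis (- a1)" by simp
    then show ?thesis unfolding S_def E1'_def u'_def P_def
      by (simp only: mexpH[OF oH uv] exp_cis' nfm[OF oH uv]) (rule nf_cong, simp_all add: algebra_simps)
  qed
  have Wd: "F1 ** S ** F2 ** S = W"
    unfolding F1_def S_def F2_def W_def C1_def C2_def C3_def C4_def b_def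
    by (simp add: nfm', intro nf_cong) (simp_all add: algebra_simps)
  have hV: "Rxy H v U x y = V ** U"
    unfolding r0 m1 m2 m3 m4 m5 V_def Wd[symmetric] by (simp add: matrix_mul_assoc)
  have ut: "u' + u * (1 + u') = 0" using uu by (simp add: algebra_simps)
  have VI: "V - mat 1 = E1 ** nf H P 0 0 C1 C2 C3 C4 ** E1'"
    unfolding V_def E1_def E1'_def W_def mat1_nf[OF oH uv, folded P_def] conj_formula[OF oH uv, folded P_def] nf_diff
    by (rule nf_cong) (simp_all add: ut)
  define z where "z = cis A"
  define cz where "cz = cis (- A)"
  have zz: "z * cz = 1" unfolding z_def cz_def by (simp add: cis_mult)
  have zz': "cz * z = 1" using zz by (simp add: mult.commute)
  have hxy: "Complex x y = complex_of_real R * z"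
    using rcis_cmod_Arg[of "Complex x y"] unfolding rcis_def z_def A_def atan2_def R_def complex_norm
    by simp
  have hx: "complex_of_real x = complex_of_real R * (z + cz) / 2"
    using arg_cong[OF hxy, of Re] unfolding z_def cz_def by (simp add: complex_eq_iff)
  have hy: "complex_of_real y = - \<i> * complex_of_real R * (z - cz) / 2"
    using arg_cong[OF hxy, of Im] unfolding z_def cz_def by (simp add: complex_eq_iff)
  have hu: "u = \<i> * z - 1"
  proof -
    have "cis a1 = cis A * cis (pi / 2)" unfolding a1_def by (simp only: cis_mult)
    then show ?thesis unfolding u_def z_def by simp
  qed
  have hu': "u' = - \<i> * cz - 1"
  proof -
    have "cis (- a1) = cis (- A) * cis (- (pi / 2))" unfolding a1_def by (simp only: cis_mult) simp
    then show ?thesis unfolding u'_def cz_def by simp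
  qed
  have VIW: "V - mat 1 - Wcomb H v x y = E1 ** nf H P 0 0 C1 D2 D3 D4 ** E1'"
    unfolding VI[symmetric] Wcomb_nf[OF oH uv, folded P_def] E1_def E1'_def conj_formula[OF oH uv, folded P_def] nf_diff
      V_def W_def mat1_nf[OF oH uv, folded P_def]
    by (rule nf_cong) (simp_all add: ut D2_def D3_def D4_def hu hu' hx hy field_simps zz zz')
  note pqf = pq_facts[of th "aa H v", folded p_def q_def b_def]
  have k1: "C1 + C2 + C3 + C4 = complex_of_real (-4 * (1 - cos th) * (1 - aa H v))"
    unfolding pqf(1)[symmetric] C1_def C2_def C3_def C4_def by (simp add: algebra_simps)
  have k2: "C1 + C2 = Complex (2 * (1 - cos th) * (1 - 2 * aa H v)) (- 2 * sin th)"
    unfolding pqf(3)[symmetric] C1_def C2_def by (simp add: algebra_simps)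
  have k3: "C1 + C3 = Complex (- 2 * (1 - cos th) * (1 - 2 * aa H v)) (- 2 * sin th)"
    unfolding pqf(4)[symmetric] C1_def C3_def by (simp add: algebra_simps)
  have k4: "C1 = complex_of_real (-4 * (1 - cos th) * aa H v)"
    unfolding pqf(2)[symmetric] C1_def by simp
  have l1: "C1 + D2 + D3 + D4 = complex_of_real (-4 * (1 - cos th) * (1 - aa H v))"
    unfolding k1[symmetric] D2_def D3_def D4_def by (simp add: algebra_simps)
  have l2: "C1 + D2 = Complex (2 * (1 - cos th) * (1 - 2 * aa H v)) (- 2 * sin th + R)"
    unfolding D2_def using k2 by (simp add: complex_eq_iff)
  have l3: "C1 + D3 = Complex (- 2 * (1 - cos th) * (1 - 2 * aa H v)) (- 2 * sin th + R)"
    unfolding D3_def using k3 by (simp add: complex_eq_iff)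
  have sc: "sin th * sin th = 1 - cos th * cos th" using sin_squared_eq[of th] by (simp add: power2_eq_square)
  have f1: "(frob (V - mat 1))\<^sup>2 = 16 * m * (1 - cos th)"
    unfolding VI E1_def E1'_def frob_conj[OF oH uv uu cu, folded P_def] frob_nf[OF oH uv, folded P_def]
      k1 unfolding k2 k3 unfolding k4 cmod_Complex_sq cmod_real_sq m_def
    by (simp add: sc power2_eq_square algebra_simps)
  have f2: "(frob (V - mat 1 - Wcomb H v x y))\<^sup>2 = 8 * m * ((1 - cos th)\<^sup>2 + (th - sin th)\<^sup>2)"
    unfolding VIW E1_def E1'_def frob_conj[OF oH uv uu cu, folded P_def] frob_nf[OF oH uv, folded P_def]
      l1 unfolding l2 l3 unfolding k4 cmod_Complex_sq cmod_real_sq m_def R2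
    by (simp add: sc power2_eq_square algebra_simps)
  show ?thesis using hV f1 f2 by blast
qed

end


lemma ineq1: "2 * (1 - cos t) \<le> (t::real)\<^sup>2"
proof -
  have c: "cos t = 1 - 2 * (sin (t / 2))\<^sup>2" using cos_double_sin[of "t/2"] by simp
  have "\<bar>sin (t/2)\<bar> \<le> \<bar>t/2\<bar>" by (rule abs_sin_x_le_abs_x)
  then have "(sin (t/2))\<^sup>2 \<le> (t/2)\<^sup>2" by (metis power2_abs abs_ge_zero power_mono)
  then show ?thesis unfolding c by (simp add: power_divide)
qed

lemma ineq2:
  fixes t :: real assumes t: "0 \<le> t"
  shows "4 * ((1 - cos t)\<^sup>2 + (t - sin t)\<^sup>2) \<le> t ^ 4"
proof -
  define g where "g = (\<lambda>s::real. s ^ 4 / 4 - s\<^sup>2 - 2 + 2 * cos s + 2 * s * sin s)"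
  have "g 0 \<le> g t"
  proof (rule DERIV_nonneg_imp_nondecreasing[OF t])
    fix s :: real assume s: "0 \<le> s" "s \<le> t"
    have "DERIV g s :> (s ^ 3 - 2 * s + 2 * s * cos s)"
      unfolding g_def
      by (auto intro!: derivative_eq_intros simp: algebra_simps power2_eq_square power3_eq_cube)
    moreover have "0 \<le> s ^ 3 - 2 * s + 2 * s * cos s"
    proof -
      have "0 \<le> s * (s\<^sup>2 - 2 * (1 - cos s))" using ineq1[of s] s by simp
      then show ?thesis by (simp add: algebra_simps power2_eq_square power3_eq_cube)
    qed
    ultimately show "\<exists>y. DERIV g s :> y \<and> 0 \<le> y" by blast
  qed
  moreover have "(1 - cos t)\<^sup>2 + (t - sin t)\<^sup>2 = 2 - 2 * cos t + t\<^sup>2 - 2 * t * sin t"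
    using sin_squared_eq[of t] by (simp add: power2_eq_square algebra_simps)
  ultimately show ?thesis unfolding g_def by simp
qed

lemma lim1: "((\<lambda>t::real. sqrt (2 * (1 - cos t)) / t) \<longlongrightarrow> 1) (at_right 0)"
  by real_asymp

lemma lim2: "((\<lambda>t::real. sqrt ((1 - cos t)\<^sup>2 + (t - sin t)\<^sup>2) / t\<^sup>2) \<longlongrightarrow> 1/2) (at_right 0)"
  by real_asymp


context
  fixes H :: "'n::finite cmat" and v :: "complex ^ 'n"
  assumes oH: "orth_proj H" and uv: "unit_vec v" and c0pos: "frob (X0 H v) > 0"
begin

definition "mm = aa H v * (1 - aa H v)"

lemma c0sq: "(frob (X0 H v))\<^sup>2 = 2 * mm"
proof -
  have "Wcomb H v 1 0 = X0 H v" by (simp add: Wcomb_def)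
  then show ?thesis using frob_Wcomb[OF oH uv, of 1 0] by (simp add: mm_def)
qed

lemma mpos: "mm > 0"
proof -
  have "(frob (X0 H v))\<^sup>2 > 0" using c0pos by simp
  then show ?thesis using c0sq by simp
qed

lemma frob0: "frob (0::'n cmat) = 0" by (simp add: frob_def)

lemma Wcomb_inj:
  assumes U: "unitary U" and e: "Wcomb H v x y ** U = Wcomb H v x' y' ** U"
  shows "x = x' \<and> y = y'"
proof -
  have UU: "U ** adj U = mat 1" using U by (simp add: unitary_def)
  have "Wcomb H v x y ** U ** adj U = Wcomb H v x' y' ** U ** adj U" using e by simp
  then have e2: "Wcomb H v x y = Wcomb H v x' y'" by (simp add: matrix_mul_assoc[symmetric] UU)
  have "Wcomb H v (x - x') (y - y') = Wcomb H v x y - Wcomb H v x' y'"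
    unfolding Wcomb_nf[OF oH uv] nf_diff by (rule nf_cong) (simp_all add: algebra_simps)
  then have "Wcomb H v (x - x') (y - y') = 0" using e2 by simp
  then have "2 * mm * ((x - x')\<^sup>2 + (y - y')\<^sup>2) = 0"
    using frob_Wcomb[OF oH uv, of "x - x'" "y - y'"] by (simp add: frob0 mm_def)
  then have "(x - x')\<^sup>2 + (y - y')\<^sup>2 = 0" using mpos by simp
  then show ?thesis by (simp add: sum_power2_eq_zero_iff)
qed

lemma Rret_eq:
  assumes U: "unitary U"
  shows "Rret H v U (Wcomb H v x y ** U) = Rxy H v U x y"
proof -
  have "(THE (x', y'). Wcomb H v x y ** U = Wcomb H v x' y' ** U) = (x, y)"
    by (rule the_equality) (auto dest: Wcomb_inj[OF U])
  then show ?thesis unfolding Rret_def by simp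
qed

lemma eta_facts:
  fixes x y :: real and U :: "'n cmat"
  assumes U: "unitary U"
  defines "th \<equiv> sqrt (x\<^sup>2 + y\<^sup>2) / 2"
  shows "frob (Wcomb H v x y ** U) = 2 * frob (X0 H v) * th"
    and "frob (Rret H v U (Wcomb H v x y ** U) - U) = sqrt (16 * mm * (1 - cos th))"
    and "frob (Rret H v U (Wcomb H v x y ** U) - U - Wcomb H v x y ** U)
          = sqrt (8 * mm * ((1 - cos th)\<^sup>2 + (th - sin th)\<^sup>2))"
proof -
  have UU: "U ** adj U = mat 1" using U by (simp add: unitary_def)
  obtain V where hV: "Rxy H v U x y = V ** U" and f1: "(frob (V - mat 1))\<^sup>2 = 16 * mm * (1 - cos th)"
    and f2: "(frob (V - mat 1 - Wcomb H v x y))\<^sup>2 = 8 * mm * ((1 - cos th)\<^sup>2 + (th - sin th)\<^sup>2)"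
    using main_calc[OF oH uv, where x=x and y=y and U=U] unfolding th_def mm_def by blast
  have sq: "\<And>A r. (frob A)\<^sup>2 = r \<Longrightarrow> frob A = sqrt r"
    by (metis frob_nonneg real_sqrt_abs abs_of_nonneg)
  have "frob (Wcomb H v x y ** U) = frob (Wcomb H v x y)" by (rule frob_mult_unitary_right[OF UU])
  also have "\<dots> = sqrt (2 * mm * (x\<^sup>2 + y\<^sup>2))" by (rule sq) (simp add: frob_Wcomb[OF oH uv] mm_def)
  also have "\<dots> = sqrt (2 * mm) * sqrt (x\<^sup>2 + y\<^sup>2)" by (simp add: real_sqrt_mult)
  also have "sqrt (2 * mm) = frob (X0 H v)" using c0sq by (metis sq)
  finally show "frob (Wcomb H v x y ** U) = 2 * frob (X0 H v) * th" unfolding th_def by simp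
  have "Rret H v U (Wcomb H v x y ** U) - U = (V - mat 1) ** U"
    by (simp add: Rret_eq[OF U] hV matrix_sub_rdistrib')
  then show "frob (Rret H v U (Wcomb H v x y ** U) - U) = sqrt (16 * mm * (1 - cos th))"
    using frob_mult_unitary_right[OF UU] f1 sq by metis
  have "Rret H v U (Wcomb H v x y ** U) - U - Wcomb H v x y ** U = (V - mat 1 - Wcomb H v x y) ** U"
    by (simp add: Rret_eq[OF U] hV matrix_sub_rdistrib')
  then show "frob (Rret H v U (Wcomb H v x y ** U) - U - Wcomb H v x y ** U)
          = sqrt (8 * mm * ((1 - cos th)\<^sup>2 + (th - sin th)\<^sup>2))"
    using frob_mult_unitary_right[OF UU] f2 sq by metis
qed

end


theorem theorem5p5:
  fixes H :: "complex ^'n::finite ^'n" and v :: "complex ^'n"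
  assumes "orth_proj H" and "unit_vec v" and "frob (X0 H v) > 0"
  shows "(\<forall>U \<eta>. unitary U \<and> \<eta> \<in> WU H v U \<longrightarrow>
            frob (Rret H v U \<eta> - U) \<le> frob \<eta> \<and>
            frob (Rret H v U \<eta> - U - \<eta>) \<le> (frob \<eta>)\<^sup>2 / (4 * frob (X0 H v)))
       \<and> (\<forall>U. unitary U \<longrightarrow>
            ((\<lambda>\<eta>. frob (Rret H v U \<eta> - U) / frob \<eta>) \<longlongrightarrow> 1) (at 0 within WU H v U)
          \<and> ((\<lambda>\<eta>. frob (Rret H v U \<eta> - U - \<eta>) / (frob \<eta>)\<^sup>2) \<longlongrightarrow> 1 / (4 * frob (X0 H v)))
               (at 0 within WU H v U))"
proof -
  note oH = assms(1) and uv = assms(2) and cp = assms(3)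
  define c0 where "c0 = frob (X0 H v)"
  define m where "m = mm H v"
  have c0p: "c0 > 0" using cp unfolding c0_def .
  have mp: "m > 0" unfolding m_def by (rule mpos[OF oH uv cp])
  have c0sq': "c0\<^sup>2 = 2 * m" unfolding c0_def m_def by (rule c0sq[OF oH uv cp])
  note ef = eta_facts[OF oH uv cp, folded c0_def m_def]
  have sq2: "sqrt ((2 * c0)\<^sup>2 * r) = 2 * c0 * sqrt r" for r
    using c0p by (simp add: real_sqrt_mult)
  have P1: "frob (Rret H v U \<eta> - U) \<le> frob \<eta> \<and>
            frob (Rret H v U \<eta> - U - \<eta>) \<le> (frob \<eta>)\<^sup>2 / (4 * c0)"
    if U: "unitary U" and e: "\<eta> \<in> WU H v U" for U \<eta>
  proof -
    obtain x y where eta: "\<eta> = Wcomb H v x y ** U" using e unfolding WU_def by blast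
    define th where "th = sqrt (x\<^sup>2 + y\<^sup>2) / 2"
    have th0: "0 \<le> th" unfolding th_def by simp
    note f = ef[OF U, of x y, folded th_def eta]
    have i1: "16 * m * (1 - cos th) \<le> (2 * c0 * th)\<^sup>2"
    proof -
      have "(2 * c0 * th)\<^sup>2 = 8 * m * th\<^sup>2" using c0sq' by (simp add: power_mult_distrib)
      moreover have "16 * m * (1 - cos th) \<le> 8 * m * th\<^sup>2"
        using mult_left_mono[OF ineq1[of th], of "8 * m"] mp by simp
      ultimately show ?thesis by simp
    qed
    have i2: "8 * m * ((1 - cos th)\<^sup>2 + (th - sin th)\<^sup>2) \<le> ((2 * c0 * th)\<^sup>2 / (4 * c0))\<^sup>2"
    proof -
      have "((2 * c0 * th)\<^sup>2 / (4 * c0))\<^sup>2 = 2 * m * th ^ 4"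
        using c0p c0sq' by (simp add: power_mult_distrib power_divide field_simps) (simp add: power2_eq_square)
      moreover have "8 * m * ((1 - cos th)\<^sup>2 + (th - sin th)\<^sup>2) \<le> 2 * m * th ^ 4"
        using mult_left_mono[OF ineq2[OF th0], of "2 * m"] mp by simp
      ultimately show ?thesis by simp
    qed
    show ?thesis
      unfolding f using i1 i2 c0p th0
      by (auto intro!: real_le_lsqrt)
  qed
  have P2: "((\<lambda>\<eta>. frob (Rret H v U \<eta> - U) / frob \<eta>) \<longlongrightarrow> 1) (at 0 within WU H v U)
          \<and> ((\<lambda>\<eta>. frob (Rret H v U \<eta> - U - \<eta>) / (frob \<eta>)\<^sup>2) \<longlongrightarrow> 1 / (4 * c0))
               (at 0 within WU H v U)" if U: "unitary U" for U
  proof -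
    define F where "F = at (0::'n cmat) within WU H v U"
    have ev: "eventually (\<lambda>\<eta>. \<eta> \<in> WU H v U \<and> \<eta> \<noteq> 0) F"
      unfolding F_def eventually_at_filter by simp
    have fl: "filterlim (\<lambda>\<eta>. frob \<eta> / (2 * c0)) (at_right 0) F"
      unfolding filterlim_at
    proof
      show "eventually (\<lambda>\<eta>. frob \<eta> / (2 * c0) \<in> {0<..} \<and> frob \<eta> / (2 * c0) \<noteq> 0) F"
        using ev by eventually_elim (use c0p in \<open>simp add: frob_eq_norm\<close>)
      have "((\<lambda>\<eta>. norm \<eta> / (2 * c0)) \<longlongrightarrow> norm (0::'n cmat) / (2 * c0)) F"
        unfolding F_def using c0p by (intro tendsto_intros) simp_all
      then show "((\<lambda>\<eta>. frob \<eta> / (2 * c0)) \<longlongrightarrow> 0) F" by (simp add: frob_eq_norm)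
    qed
    have rep: "frob (Rret H v U \<eta> - U) / frob \<eta> = (\<lambda>t. sqrt (2 * (1 - cos t)) / t) (frob \<eta> / (2 * c0))
       \<and> frob (Rret H v U \<eta> - U - \<eta>) / (frob \<eta>)\<^sup>2
          = (\<lambda>t. sqrt ((1 - cos t)\<^sup>2 + (t - sin t)\<^sup>2) / t\<^sup>2 / (2 * c0)) (frob \<eta> / (2 * c0))"
      if e: "\<eta> \<in> WU H v U" for \<eta>
    proof -
      obtain x y where eta: "\<eta> = Wcomb H v x y ** U" using e unfolding WU_def by blast
      define th where "th = sqrt (x\<^sup>2 + y\<^sup>2) / 2"
      note f = ef[OF U, of x y, folded th_def eta]
      have t: "frob \<eta> / (2 * c0) = th" unfolding f using c0p by simp
      have a: "16 * m * (1 - cos th) = (2 * c0)\<^sup>2 * (2 * (1 - cos th))"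
        using c0sq' by (simp add: power_mult_distrib)
      have b: "8 * m * ((1 - cos th)\<^sup>2 + (th - sin th)\<^sup>2) = (2 * c0)\<^sup>2 * ((1 - cos th)\<^sup>2 + (th - sin th)\<^sup>2)"
        using c0sq' by (simp add: power_mult_distrib)
      show ?thesis unfolding t unfolding f a b sq2 using c0p
        by (simp add: power_mult_distrib field_simps power2_eq_square)
    qed
    have ev2: "eventually (\<lambda>\<eta>. frob (Rret H v U \<eta> - U) / frob \<eta> = (\<lambda>t. sqrt (2 * (1 - cos t)) / t) (frob \<eta> / (2 * c0))
       \<and> frob (Rret H v U \<eta> - U - \<eta>) / (frob \<eta>)\<^sup>2
          = (\<lambda>t. sqrt ((1 - cos t)\<^sup>2 + (t - sin t)\<^sup>2) / t\<^sup>2 / (2 * c0)) (frob \<eta> / (2 * c0))) F"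
      using ev by eventually_elim (use rep in blast)
    have L1: "((\<lambda>\<eta>. (\<lambda>t. sqrt (2 * (1 - cos t)) / t) (frob \<eta> / (2 * c0))) \<longlongrightarrow> 1) F"
      by (rule filterlim_compose[OF lim1 fl])
    have lim2': "((\<lambda>t. sqrt ((1 - cos t)\<^sup>2 + (t - sin t)\<^sup>2) / t\<^sup>2 / (2 * c0)) \<longlongrightarrow> 1 / (4 * c0)) (at_right 0)"
    proof -
      have "((\<lambda>t. sqrt ((1 - cos t)\<^sup>2 + (t - sin t)\<^sup>2) / t\<^sup>2 / (2 * c0)) \<longlongrightarrow> (1/2) / (2 * c0)) (at_right 0)"
        using c0p by (intro tendsto_divide lim2 tendsto_const) simp
      then show ?thesis by simp
    qed
    have L2: "((\<lambda>\<eta>. (\<lambda>t. sqrt ((1 - cos t)\<^sup>2 + (t - sin t)\<^sup>2) / t\<^sup>2 / (2 * c0)) (frob \<eta> / (2 * c0))) \<longlongrightarrow> 1 / (4 * c0)) F"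
      by (rule filterlim_compose[OF lim2' fl])
    have e1: "eventually (\<lambda>\<eta>. frob (Rret H v U \<eta> - U) / frob \<eta> = (\<lambda>t. sqrt (2 * (1 - cos t)) / t) (frob \<eta> / (2 * c0))) F"
      using ev2 by eventually_elim blast
    have e2: "eventually (\<lambda>\<eta>. frob (Rret H v U \<eta> - U - \<eta>) / (frob \<eta>)\<^sup>2
          = (\<lambda>t. sqrt ((1 - cos t)\<^sup>2 + (t - sin t)\<^sup>2) / t\<^sup>2 / (2 * c0)) (frob \<eta> / (2 * c0))) F"
      using ev2 by eventually_elim blast
    show ?thesis
      using tendsto_cong[OF e1] tendsto_cong[OF e2] L1 L2 unfolding F_def by blast
  qed
  show ?thesis using P1 P2 unfolding c0_def by blast
qed


end
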